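(* For every $\beta>0$ there is $\gamma=\gamma(\beta)>0$ and $n_0$ such that the following holds for all $n\ge n_0$. Let $G$ be an $n$-vertex graph such that for every partition $V(G)=X\cup Y$ with $|X|=\lfloor n/2\rfloor$ it holds that $\left|e(X,Y)-\frac12|X||Y|\right|\le\gamma n^2$. Then $G$ is host-$\beta$-good.
   Context: $e(X,Y)$ is the number of edges of $G$ between $X$ and $Y$. For a vertex $x$ and set $S$, $N_S(x)$ is the set of neighbors of $x$ in $S$ and $d_S(x)=|N_S(x)|$. An $n$-vertex graph $G$ is host-$\beta$-good if there is a partition $V(G)=X\cup Y$ with $|X|=\lfloor n/2\rfloor$ and distinct vertices $x_1,x_1',\dots,x_m,x_m'\in X$ with $m=0.05n$, such that for every $1\le i\le m$: (1) $|d_Y(x_i)-d_Y(x_i')|\le\beta n$; (2) $0.02|Y|\le|N_Y(x_i)\triangle N_Y(x_i')|\le0.98|Y|$; (3) $0.1|Y|\le d_Y(x_i),d_Y(x_i')\le0.9|Y|$. *)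

theory Defs
  imports Complex_Main
begin

definition is_graph :: "'a set \<Rightarrow> ('a \<Rightarrow> 'a \<Rightarrow> bool) \<Rightarrow> bool" where
  "is_graph V E \<longleftrightarrow> finite V \<and> (\<forall>x y. E x y \<longrightarrow> x \<in> V \<and> y \<in> V) \<and>
     (\<forall>x y. E x y \<longrightarrow> E y x) \<and> (\<forall>x. \<not> E x x)"

definition e_between :: "('a \<Rightarrow> 'a \<Rightarrow> bool) \<Rightarrow> 'a set \<Rightarrow> 'a set \<Rightarrow> nat" where
  "e_between E X Y = card {(x, y). x \<in> X \<and> y \<in> Y \<and> E x y}"

definition nbhd :: "('a \<Rightarrow> 'a \<Rightarrow> bool) \<Rightarrow> 'a set \<Rightarrow> 'a \<Rightarrow> 'a set" where
  "nbhd E S x = {y \<in> S. E x y}"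

definition deg :: "('a \<Rightarrow> 'a \<Rightarrow> bool) \<Rightarrow> 'a set \<Rightarrow> 'a \<Rightarrow> nat" where
  "deg E S x = card (nbhd E S x)"

text \<open>host-beta-good. m = 0.05 n is read as ceiling(n/20).\<close>
definition host_good :: "real \<Rightarrow> 'a set \<Rightarrow> ('a \<Rightarrow> 'a \<Rightarrow> bool) \<Rightarrow> bool" where
  "host_good \<beta> V E \<longleftrightarrow> (let n = card V; m = nat \<lceil>real n / 20\<rceil> in
     \<exists>X Y xs xs'. X \<union> Y = V \<and> X \<inter> Y = {} \<and> card X = n div 2 \<and>
       (\<forall>i<m. xs i \<in> X \<and> xs' i \<in> X) \<and>
       inj_on (\<lambda>p. if fst p then xs (snd p) else xs' (snd p)) (UNIV \<times> {..<m}) \<and>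
       (\<forall>i<m.
          \<bar>real (deg E Y (xs i)) - real (deg E Y (xs' i))\<bar> \<le> \<beta> * real n \<and>
          0.02 * card Y \<le> real (card (sym_diff (nbhd E Y (xs i)) (nbhd E Y (xs' i)))) \<and>
          real (card (sym_diff (nbhd E Y (xs i)) (nbhd E Y (xs' i)))) \<le> 0.98 * card Y \<and>
          0.1 * card Y \<le> real (deg E Y (xs i)) \<and> real (deg E Y (xs i)) \<le> 0.9 * card Y \<and>
          0.1 * card Y \<le> real (deg E Y (xs' i)) \<and> real (deg E Y (xs' i)) \<le> 0.9 * card Y))"

end

theory Submission
  imports Defs
begin


definition ss :: "('a \<Rightarrow> 'a \<Rightarrow> bool) \<Rightarrow> 'a set \<Rightarrow> 'a set \<Rightarrow> real" where
  "ss E P Q = (\<Sum>x\<in>P. real (deg E Q x))"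

lemma deg_sum: "finite Q \<Longrightarrow> deg E Q x = (\<Sum>y\<in>Q. if E x y then 1 else 0)"
proof -
  have "{y\<in>Q. E x y} = Q \<inter> Collect (E x)" by auto
  thus "finite Q \<Longrightarrow> deg E Q x = (\<Sum>y\<in>Q. if E x y then 1 else 0)"
    unfolding deg_def nbhd_def by (simp add: sum.If_cases)
qed

lemma ss_alt: "finite Q \<Longrightarrow> ss E P Q = (\<Sum>x\<in>P. \<Sum>y\<in>Q. if E x y then 1 else 0)"
proof -
  assume "finite Q"
  thus ?thesis unfolding ss_def deg_sum[OF \<open>finite Q\<close>] of_nat_sum
    by (intro sum.cong refl) auto
qed

lemma ss_sym:
  assumes "finite P" "finite Q" "\<forall>x y. E x y \<longrightarrow> E y x"
  shows "ss E P Q = ss E Q P"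
proof -
  have "ss E P Q = (\<Sum>x\<in>P. \<Sum>y\<in>Q. if E x y then 1 else 0)" using assms by (simp add: ss_alt)
  also have "\<dots> = (\<Sum>y\<in>Q. \<Sum>x\<in>P. if E x y then 1 else 0)" by (rule sum.swap)
  also have "\<dots> = (\<Sum>y\<in>Q. \<Sum>x\<in>P. if E y x then 1 else 0)"
    using assms(3) by (intro sum.cong refl) metis
  also have "\<dots> = ss E Q P" using assms by (simp add: ss_alt)
  finally show ?thesis .
qed

lemma ss_union1:
  assumes "finite A" "finite B" "A \<inter> B = {}"
  shows "ss E (A \<union> B) Q = ss E A Q + ss E B Q"
  unfolding ss_def using assms by (simp add: sum.union_disjoint)

lemma deg_union:
  assumes "finite A" "finite B" "A \<inter> B = {}"
  shows "deg E (A \<union> B) x = deg E A x + deg E B x"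
proof -
  have "nbhd E (A \<union> B) x = nbhd E A x \<union> nbhd E B x" unfolding nbhd_def by auto
  moreover have "nbhd E A x \<inter> nbhd E B x = {}" using assms(3) unfolding nbhd_def by auto
  moreover have "finite (nbhd E A x)" "finite (nbhd E B x)" using assms unfolding nbhd_def by auto
  ultimately show ?thesis unfolding deg_def by (simp add: card_Un_disjoint)
qed

lemma ss_union2:
  assumes "finite A" "finite B" "A \<inter> B = {}"
  shows "ss E P (A \<union> B) = ss E P A + ss E P B"
  unfolding ss_def deg_union[OF assms] by (simp add: sum.distrib)

lemma ss_union3:
  assumes "finite A1" "finite A2" "finite A3" "finite B1" "finite B2" "finite B3"
   "A1 \<inter> A2 = {}" "A1 \<inter> A3 = {}" "A2 \<inter> A3 = {}" "B1 \<inter> B2 = {}" "B1 \<inter> B3 = {}" "B2 \<inter> B3 = {}"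
  shows "ss E (A1 \<union> A2 \<union> A3) (B1 \<union> B2 \<union> B3) =
     ss E A1 B1 + ss E A1 B2 + ss E A1 B3 + ss E A2 B1 + ss E A2 B2 + ss E A2 B3
   + ss E A3 B1 + ss E A3 B2 + ss E A3 B3"
proof -
  have d1: "(A1 \<union> A2) \<inter> A3 = {}" "(B1 \<union> B2) \<inter> B3 = {}" using assms by auto
  have f: "finite (A1 \<union> A2)" "finite (B1 \<union> B2)" using assms by auto
  have l: "ss E (A1 \<union> A2 \<union> A3) Q = ss E A1 Q + ss E A2 Q + ss E A3 Q" for Q
    using ss_union1[OF f(1) assms(3) d1(1)] ss_union1[OF assms(1,2,7)] by simp
  have r: "ss E P (B1 \<union> B2 \<union> B3) = ss E P B1 + ss E P B2 + ss E P B3" for P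
    using ss_union2[OF f(2) assms(6) d1(2)] ss_union2[OF assms(4,5,10)] by simp
  show ?thesis unfolding l r by simp
qed

lemma e_between_ss:
  assumes "finite P" "finite Q"
  shows "real (e_between E P Q) = ss E P Q"
proof -
  have "{(x, y). x \<in> P \<and> y \<in> Q \<and> E x y} = Sigma P (nbhd E Q)"
    unfolding nbhd_def by auto
  hence "e_between E P Q = (\<Sum>x\<in>P. card (nbhd E Q x))"
    unfolding e_between_def using assms by (simp add: nbhd_def)
  thus ?thesis unfolding ss_def deg_def by simp
qed

lemma ss_nonneg: "ss E P Q \<ge> 0" unfolding ss_def by (simp add: sum_nonneg)

lemma deg_le: "finite Q \<Longrightarrow> deg E Q x \<le> card Q"
  unfolding deg_def nbhd_def by (simp add: card_mono)

lemma ss_le: "finite Q \<Longrightarrow> ss E P Q \<le> real (card P) * real (card Q)"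
proof -
  assume "finite Q"
  hence "ss E P Q \<le> (\<Sum>x\<in>P. real (card Q))" unfolding ss_def
    by (intro sum_mono) (simp add: deg_le)
  thus ?thesis by simp
qed



definition cutcond :: "real \<Rightarrow> nat set \<Rightarrow> (nat \<Rightarrow> nat \<Rightarrow> bool) \<Rightarrow> bool" where
  "cutcond \<gamma> V E \<longleftrightarrow> (\<forall>X Y. X \<union> Y = V \<longrightarrow> X \<inter> Y = {} \<longrightarrow> card X = card V div 2 \<longrightarrow>
              \<bar>real (e_between E X Y) - real (card X) * real (card Y) / 2\<bar> \<le> \<gamma> * real (card V) ^ 2)"

lemma cut_T:
  assumes G: "is_graph V E" and cut: "cutcond \<gamma> V E" and T: "T \<subseteq> V" "card T = card V div 2"
  shows "\<bar>ss E T (V - T) - real (card V div 2) * real (card V - card V div 2) / 2\<bar> \<le> \<gamma> * real (card V) ^ 2"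
proof -
  have fV: "finite V" using G unfolding is_graph_def by auto
  have "card (V - T) = card V - card V div 2" using T fV by (simp add: card_Diff_subset finite_subset)
  moreover have "real (e_between E T (V - T)) = ss E T (V - T)"
    using fV T by (intro e_between_ss) (auto intro: finite_subset)
  moreover have "T \<union> (V - T) = V" "T \<inter> (V - T) = {}" using T by auto
  ultimately show ?thesis using cut T unfolding cutcond_def by metis
qed

lemma K_lemma:
  assumes G: "is_graph V E" and cut: "cutcond \<gamma> V E"
  and sub: "U1 \<subseteq> V" "W1 \<subseteq> V" "U2 \<subseteq> V" "W2 \<subseteq> V"
  and disj: "U1 \<inter> W1 = {}" "U1 \<inter> U2 = {}" "U1 \<inter> W2 = {}" "W1 \<inter> U2 = {}" "W1 \<inter> W2 = {}" "U2 \<inter> W2 = {}"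
  and cd: "card U1 = card W1" "card U2 = card W2" "card U1 + card U2 \<le> card V div 2"
  shows "\<bar>ss E U1 U2 + ss E W1 W2 - ss E U1 W2 - ss E W1 U2\<bar> \<le> 2 * \<gamma> * real (card V) ^ 2"
proof -
  have fV: "finite V" using G unfolding is_graph_def by auto
  have symE: "\<forall>x y. E x y \<longrightarrow> E y x" using G unfolding is_graph_def by auto
  have fin: "finite U1" "finite W1" "finite U2" "finite W2" using sub fV by (auto intro: finite_subset)
  define R where "R = V - (U1 \<union> W1 \<union> U2 \<union> W2)"
  have fR: "finite R" using fV R_def by auto
  have "card (U1 \<union> W1 \<union> U2 \<union> W2) = card U1 + card W1 + card U2 + card W2"
    using fin disj by (simp add: card_Un_disjoint Int_Un_distrib Int_Un_distrib2 Int_commute)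
  hence cR: "card R = card V - (card U1 + card W1 + card U2 + card W2)"
    unfolding R_def using sub fV by (simp add: card_Diff_subset finite_subset)
  have "card V div 2 - (card U1 + card U2) \<le> card R" using cR cd by linarith
  then obtain C where C: "C \<subseteq> R" "card C = card V div 2 - (card U1 + card U2)"
    by (meson obtain_subset_with_card_n)
  define D where "D = R - C"
  have fC: "finite C" "finite D" using C fR D_def by (auto intro: finite_subset)
  have dCR: "C \<inter> U1 = {}" "C \<inter> W1 = {}" "C \<inter> U2 = {}" "C \<inter> W2 = {}" "C \<inter> D = {}"
      "D \<inter> U1 = {}" "D \<inter> W1 = {}" "D \<inter> U2 = {}" "D \<inter> W2 = {}"
    using C unfolding D_def R_def by auto
  have V: "V = C \<union> D \<union> U1 \<union> W1 \<union> U2 \<union> W2" using C sub unfolding D_def R_def by auto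
  define h where "h = card V div 2"
  define T where "T = real (card V div 2) * real (card V - card V div 2) / 2"
  have ccard: "card (A1 \<union> A2 \<union> A3) = card A1 + card A2 + card A3"
    if "finite A1" "finite A2" "finite A3" "A1 \<inter> A2 = {}" "A1 \<inter> A3 = {}" "A2 \<inter> A3 = {}" for A1 A2 A3 :: "nat set"
    using that by (simp add: card_Un_disjoint Int_Un_distrib2)
  have S0: "\<bar>ss E (C \<union> U1 \<union> U2) (D \<union> W1 \<union> W2) - T\<bar> \<le> \<gamma> * real (card V) ^ 2"
  proof -
    have "V - (C \<union> U1 \<union> U2) = D \<union> W1 \<union> W2" using V dCR disj by auto
    moreover have "card (C \<union> U1 \<union> U2) = card V div 2" using ccard[of C U1 U2] fC fin dCR disj C cd by simp
    moreover have "C \<union> U1 \<union> U2 \<subseteq> V" using V by auto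
    ultimately show ?thesis using cut_T[OF G cut] unfolding T_def by metis
  qed
  have S1: "\<bar>ss E (C \<union> W1 \<union> U2) (D \<union> U1 \<union> W2) - T\<bar> \<le> \<gamma> * real (card V) ^ 2"
  proof -
    have "V - (C \<union> W1 \<union> U2) = D \<union> U1 \<union> W2" using V dCR disj by auto
    moreover have "card (C \<union> W1 \<union> U2) = card V div 2" using ccard[of C W1 U2] fC fin dCR disj C cd by simp
    moreover have "C \<union> W1 \<union> U2 \<subseteq> V" using V by auto
    ultimately show ?thesis using cut_T[OF G cut] unfolding T_def by metis
  qed
  have S2: "\<bar>ss E (C \<union> U1 \<union> W2) (D \<union> W1 \<union> U2) - T\<bar> \<le> \<gamma> * real (card V) ^ 2"
  proof -
    have "V - (C \<union> U1 \<union> W2) = D \<union> W1 \<union> U2" using V dCR disj by auto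
    moreover have "card (C \<union> U1 \<union> W2) = card V div 2" using ccard[of C U1 W2] fC fin dCR disj C cd by simp
    moreover have "C \<union> U1 \<union> W2 \<subseteq> V" using V by auto
    ultimately show ?thesis using cut_T[OF G cut] unfolding T_def by metis
  qed
  have S3: "\<bar>ss E (C \<union> W1 \<union> W2) (D \<union> U1 \<union> U2) - T\<bar> \<le> \<gamma> * real (card V) ^ 2"
  proof -
    have "V - (C \<union> W1 \<union> W2) = D \<union> U1 \<union> U2" using V dCR disj by auto
    moreover have "card (C \<union> W1 \<union> W2) = card V div 2" using ccard[of C W1 W2] fC fin dCR disj C cd by simp
    moreover have "C \<union> W1 \<union> W2 \<subseteq> V" using V by auto
    ultimately show ?thesis using cut_T[OF G cut] unfolding T_def by metis
  qed
  have i: "Ai \<inter> Aj = {} \<Longrightarrow> Aj \<inter> Ai = {}" for Ai Aj :: "nat set" by auto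
  note e0 = ss_union3[of C U1 U2 D W1 W2 E]
  note e1 = ss_union3[of C W1 U2 D U1 W2 E]
  note e2 = ss_union3[of C U1 W2 D W1 U2 E]
  note e3 = ss_union3[of C W1 W2 D U1 U2 E]
  have sy: "ss E W1 U1 = ss E U1 W1" "ss E W2 U1 = ss E U1 W2" "ss E W1 U2 = ss E U2 W1"
     "ss E W2 W1 = ss E W1 W2" "ss E U2 U1 = ss E U1 U2" "ss E W2 U2 = ss E U2 W2"
    using fin symE by (auto intro: ss_sym)
  show ?thesis using S0 S1 S2 S3 e0 e1 e2 e3 fin fC dCR disj sy i[OF disj(1)] by (auto simp: abs_le_iff)
qed



lemma big_level:
  fixes g :: "'a \<Rightarrow> real"
  assumes "finite Y" "\<forall>y\<in>Y. g y \<le> t" "(\<Sum>y\<in>Y. g y) \<ge> 0.8 * t * card Y" "t > 0"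
  shows "real (card {y\<in>Y. g y \<ge> 0.6 * t}) \<ge> 0.5 * card Y"
proof -
  let ?P = "{y\<in>Y. g y \<ge> 0.6 * t}"
  have fP: "finite ?P" "finite (Y - ?P)" using assms(1) by auto
  have "(\<Sum>y\<in>Y. g y) = (\<Sum>y\<in>?P. g y) + (\<Sum>y\<in>Y - ?P. g y)"
    using assms(1) by (metis (no_types, lifting) mem_Collect_eq subsetI sum.subset_diff add.commute)
  also have "(\<Sum>y\<in>?P. g y) \<le> (\<Sum>y\<in>?P. t)" using assms(2) by (intro sum_mono) auto
  also have "(\<Sum>y\<in>Y - ?P. g y) \<le> (\<Sum>y\<in>Y - ?P. 0.6 * t)" by (intro sum_mono) auto
  finally have "(\<Sum>y\<in>Y. g y) \<le> t * card ?P + 0.6 * t * card (Y - ?P)" by (simp add: algebra_simps)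
  hence "0.8 * t * card Y \<le> t * card ?P + 0.6 * t * card (Y - ?P)" using assms(3) by linarith
  moreover have "real (card (Y - ?P)) = real (card Y) - real (card ?P)"
    using assms(1) by (simp add: card_Diff_subset of_nat_diff card_mono)
  ultimately have 1: "0.8 * t * card Y \<le> t * card ?P + 0.6 * t * (real (card Y) - real (card ?P))" by simp
  have "t * (0.4 * card ?P - 0.2 * card Y) = t * card ?P + 0.6 * t * (real (card Y) - real (card ?P)) - 0.8 * t * card Y"
    by (simp add: algebra_simps)
  hence "t * (0.4 * card ?P - 0.2 * card Y) \<ge> 0" using 1 by linarith
  hence "0.4 * card ?P - 0.2 * card Y \<ge> 0" using assms(4) by (simp add: zero_le_mult_iff)
  thus ?thesis by simp
qed

lemma ss_diff_sum:
  assumes "finite B" "finite P" "finite Q" "\<forall>x y. E x y \<longrightarrow> E y x"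
  shows "ss E P B - ss E Q B = (\<Sum>y\<in>B. real (deg E P y) - real (deg E Q y))"
  using ss_sym[OF assms(2,1,4)] ss_sym[OF assms(3,1,4)] unfolding ss_def by (simp add: sum_subtractf)

lemma degree_lemma:
  assumes G: "is_graph V E" and cut: "cutcond \<gamma> V E"
  and X: "X \<subseteq> V" "card X = card V div 2" and Y: "Y = V - X"
  and H: "H1 \<subseteq> X" "H2 \<subseteq> X" "H1 \<inter> H2 = {}" "card H1 = t" "card H2 = t"
     "\<forall>x\<in>H1 \<union> H2. real (deg E Y x) > 0.9 * card Y"
  and L: "L1 \<subseteq> X" "L2 \<subseteq> X" "L1 \<inter> L2 = {}" "card L1 = t" "card L2 = t"
     "\<forall>x\<in>L1 \<union> L2. real (deg E Y x) < 0.1 * card Y"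
  and t: "t > 0" "2 * t \<le> card V div 2" "real (2 * t) \<le> 0.5 * card Y" "0.2 * real t ^ 2 > 4 * \<gamma> * real (card V) ^ 2"
  shows False
proof -
  have fV: "finite V" using G unfolding is_graph_def by auto
  have symE: "\<forall>x y. E x y \<longrightarrow> E y x" using G unfolding is_graph_def by auto
  have fY: "finite Y" using fV Y by auto
  have fX: "finite X" using X fV by (auto intro: finite_subset)
  have fin: "finite H1" "finite H2" "finite L1" "finite L2" using H L fX by (auto intro: finite_subset)
  have key: "real (card {y\<in>Y. real (deg E P y) - real (deg E Q y) \<ge> 0.6 * t}) \<ge> 0.5 * card Y"
    if P: "P \<subseteq> H1 \<union> H2" "card P = t" and Q: "Q \<subseteq> L1 \<union> L2" "card Q = t" for P Q
  proof (rule big_level)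
    show "finite Y" by fact
    have fP: "finite P" "finite Q" using P Q fin by (auto intro: finite_subset)
    show "\<forall>y\<in>Y. real (deg E P y) - real (deg E Q y) \<le> real t"
    proof
      fix y assume "y \<in> Y"
      have "real (deg E P y) \<le> real t" using deg_le[OF fP(1)] P by simp
      thus "real (deg E P y) - real (deg E Q y) \<le> real t" by simp
    qed
    show "real t > 0" using t by simp
    have "ss E P Y \<ge> (\<Sum>x\<in>P. 0.9 * card Y)" unfolding ss_def
      using H(6) P by (intro sum_mono) (auto intro: less_imp_le)
    moreover have "ss E Q Y \<le> (\<Sum>x\<in>Q. 0.1 * card Y)" unfolding ss_def
      using L(6) Q by (intro sum_mono) (auto intro: less_imp_le)
    ultimately have "ss E P Y - ss E Q Y \<ge> 0.8 * t * card Y" using P Q by simp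
    thus "(\<Sum>y\<in>Y. real (deg E P y) - real (deg E Q y)) \<ge> 0.8 * t * card Y"
      using ss_diff_sum[OF fY fP symE] by simp
  qed
  define Yp where "Yp = {y\<in>Y. real (deg E H1 y) - real (deg E L1 y) \<ge> 0.6 * t}"
  define Yq where "Yq = {y\<in>Y. real (deg E H2 y) - real (deg E L2 y) \<ge> 0.6 * t}"
  have cYp: "real (card Yp) \<ge> 0.5 * card Y" unfolding Yp_def using key[of H1 L1] H L by auto
  have cYq: "real (card Yq) \<ge> 0.5 * card Y" unfolding Yq_def using key[of H2 L2] H L by auto
  obtain B where B: "B \<subseteq> Yp" "card B = t"
    using cYp t by (metis obtain_subset_with_card_n of_nat_le_iff order_trans le_add2 mult_2 of_nat_mult)
  have fB: "finite B" "finite Yq" using B fY unfolding Yp_def Yq_def by (auto intro: finite_subset)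
  have "card (Yq - B) \<ge> card Yq - card B" by (simp add: diff_card_le_card_Diff fB)
  hence "card (Yq - B) \<ge> t" using cYq B t by linarith
  then obtain A where A: "A \<subseteq> Yq - B" "card A = t" by (meson obtain_subset_with_card_n)
  have fA: "finite A" using A fB by (auto intro: finite_subset)
  have AY: "A \<subseteq> Y" "B \<subseteq> Y" using A B unfolding Yp_def Yq_def by auto
  have K1: "\<bar>ss E H1 H2 + ss E A B - ss E H1 B - ss E A H2\<bar> \<le> 2 * \<gamma> * real (card V) ^ 2"
    by (rule K_lemma[OF G cut]) (use H A B AY X Y t in auto)
  have K2: "\<bar>ss E L1 L2 + ss E A B - ss E L1 B - ss E A L2\<bar> \<le> 2 * \<gamma> * real (card V) ^ 2"
    by (rule K_lemma[OF G cut]) (use L A B AY X Y t in auto)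
  have b1: "ss E H1 B - ss E L1 B \<ge> 0.6 * t * t"
  proof -
    have "(\<Sum>y\<in>B. real (deg E H1 y) - real (deg E L1 y)) \<ge> (\<Sum>y\<in>B. 0.6 * t)"
      using B unfolding Yp_def by (intro sum_mono) auto
    thus ?thesis using ss_diff_sum[OF fB(1) fin(1) fin(3) symE] B by simp
  qed
  have b2: "ss E H2 A - ss E L2 A \<ge> 0.6 * t * t"
  proof -
    have "(\<Sum>y\<in>A. real (deg E H2 y) - real (deg E L2 y)) \<ge> (\<Sum>y\<in>A. 0.6 * t)"
      using A unfolding Yq_def by (intro sum_mono) auto
    thus ?thesis using ss_diff_sum[OF fA fin(2) fin(4) symE] A by simp
  qed
  have sy: "ss E A H2 = ss E H2 A" "ss E A L2 = ss E L2 A" using ss_sym fA fin symE by auto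
  have "ss E H1 H2 \<le> real t * real t" using ss_le[OF fin(2), of E H1] H by simp
  moreover have "ss E L1 L2 \<ge> 0" by (rule ss_nonneg)
  ultimately have "1.2 * t * t \<le> t * t + 4 * \<gamma> * real (card V) ^ 2"
    using K1 K2 b1 b2 sy by (auto simp: abs_le_iff)
  thus False using t(4) by (simp add: power2_eq_square)
qed



lemma sum_split_bound:
  fixes f :: "'a \<Rightarrow> real" and c1 c2 :: real
  assumes "finite A" "B \<subseteq> A" "\<forall>x\<in>B. f x \<le> c1" "\<forall>x\<in>A - B. f x \<le> c2"
  shows "(\<Sum>x\<in>A. f x) \<le> card B * c1 + card (A - B) * c2"
proof -
  have "(\<Sum>x\<in>A. f x) = (\<Sum>x\<in>B. f x) + (\<Sum>x\<in>A - B. f x)"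
    using assms(1,2) by (metis sum.subset_diff add.commute)
  also have "\<dots> \<le> (\<Sum>x\<in>B. c1) + (\<Sum>x\<in>A - B. c2)" using assms(3,4) by (intro add_mono sum_mono) auto
  finally show ?thesis by simp
qed

lemma sum_split_lbound:
  fixes f :: "'a \<Rightarrow> real" and c2 :: real
  assumes "finite A" "B \<subseteq> A" "\<forall>x\<in>A. f x \<ge> 0" "\<forall>x\<in>A - B. f x \<ge> c2"
  shows "(\<Sum>x\<in>A. f x) \<ge> card (A - B) * c2"
proof -
  have "(\<Sum>x\<in>A. f x) = (\<Sum>x\<in>B. f x) + (\<Sum>x\<in>A - B. f x)"
    using assms(1,2) by (metis sum.subset_diff add.commute)
  moreover have "(\<Sum>x\<in>B. f x) \<ge> 0" using assms(2,3) by (intro sum_nonneg) auto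
  moreover have "(\<Sum>x\<in>A - B. f x) \<ge> (\<Sum>x\<in>A - B. c2)" using assms(4) by (intro sum_mono) auto
  ultimately show ?thesis by simp
qed

lemma deg_sub_diff:
  assumes fY: "finite Y" and N: "N \<subseteq> Y" and P: "P \<subseteq> N" and Q: "Q \<subseteq> Y - N"
  shows "real (deg E P u) - real (deg E Q u) \<ge> real (card P) - real (card (sym_diff (nbhd E Y u) N))"
proof -
  let ?Nu = "nbhd E Y u"
  have fP: "finite P" "finite Q" using fY N P Q by (auto intro: finite_subset)
  have e1: "nbhd E P u = P - (P - ?Nu)" using P N unfolding nbhd_def by auto
  have e2: "nbhd E Q u = Q \<inter> ?Nu" using Q unfolding nbhd_def by auto
  have "card (nbhd E P u) = card P - card (P - ?Nu)" unfolding e1 using fP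
    by (simp add: card_Diff_subset)
  hence d1: "real (deg E P u) = real (card P) - real (card (P - ?Nu))" unfolding deg_def
    by (simp add: of_nat_diff card_mono fP)
  have "(P - ?Nu) \<union> (Q \<inter> ?Nu) \<subseteq> sym_diff ?Nu N" using P Q by auto
  moreover have "finite (sym_diff ?Nu N)" using fY N unfolding nbhd_def by (auto intro: finite_subset)
  ultimately have "card ((P - ?Nu) \<union> (Q \<inter> ?Nu)) \<le> card (sym_diff ?Nu N)" by (rule card_mono[rotated])
  moreover have "card ((P - ?Nu) \<union> (Q \<inter> ?Nu)) = card (P - ?Nu) + card (Q \<inter> ?Nu)"
    using fP P Q by (intro card_Un_disjoint) auto
  ultimately show ?thesis using d1 e2 unfolding deg_def by simp
qed

lemma cluster_lemma:
  assumes G: "is_graph V E" and cut: "cutcond \<gamma> V E"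
  and X: "X \<subseteq> V" "card X = card V div 2" and Y: "Y = V - X"
  and N: "N \<subseteq> Y" "2 * a \<le> card N" "2 * a \<le> card (Y - N)"
  and S: "S \<subseteq> X" "k \<le> card S" "\<forall>u\<in>S. real (card (sym_diff (nbhd E Y u) N)) \<le> \<delta>"
  and k: "k > 0" "k + a \<le> card V div 2"
  and a: "real a > 2 * k + 2 * \<delta> + 4 * \<gamma> * real (card V) ^ 2 / k"
  and gpos: "\<gamma> \<ge> 0" and dpos: "\<delta> \<ge> 0"
  shows False
proof -
  have fV: "finite V" using G unfolding is_graph_def by auto
  have symE: "\<forall>x y. E x y \<longrightarrow> E y x" using G unfolding is_graph_def by auto
  have fY: "finite Y" using fV Y by auto
  have fX: "finite X" using X fV by (auto intro: finite_subset)
  define c1 where "c1 = \<delta> + 2 * \<gamma> * real (card V) ^ 2 / k"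
  have kc1: "k * c1 = k * \<delta> + 2 * \<gamma> * real (card V) ^ 2" unfolding c1_def using k by (simp add: field_simps)
  have c1pos: "c1 \<ge> 0" unfolding c1_def using gpos dpos by simp
  have ac1: "real a > 2 * k + 2 * c1" using a unfolding c1_def by simp
  obtain U1 where U1: "U1 \<subseteq> S" "card U1 = k" using S by (meson obtain_subset_with_card_n)
  have fU1: "finite U1" using U1 k by (auto intro: card_ge_0_finite)
  have fN: "finite N" "finite (Y - N)" using N fY by (auto intro: finite_subset)
  have "a \<le> card N" "a \<le> card (Y - N)" using N by linarith+
  then obtain P1 where P1: "P1 \<subseteq> N" "card P1 = a" by (meson obtain_subset_with_card_n)
  have "card (N - P1) = card N - card P1" by (rule card_Diff_subset) (use P1 fN in \<open>auto intro: finite_subset\<close>)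
  hence "card (N - P1) \<ge> a" using P1 N by linarith
  then obtain P2 where P2: "P2 \<subseteq> N - P1" "card P2 = a" by (meson obtain_subset_with_card_n)
  obtain Q1 where Q1: "Q1 \<subseteq> Y - N" "card Q1 = a" using \<open>a \<le> card (Y - N)\<close> by (meson obtain_subset_with_card_n)
  have "card ((Y - N) - Q1) = card (Y - N) - card Q1" by (rule card_Diff_subset) (use Q1 fN in \<open>auto intro: finite_subset\<close>)
  hence "card ((Y - N) - Q1) \<ge> a" using Q1 N by linarith
  then obtain Q2 where Q2: "Q2 \<subseteq> (Y - N) - Q1" "card Q2 = a" by (meson obtain_subset_with_card_n)
  have fin: "finite P1" "finite P2" "finite Q1" "finite Q2" using P1 P2 Q1 Q2 fN by (auto intro: finite_subset)
  have U1X: "U1 \<subseteq> X" using U1 S by auto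
  have du: "ss E U1 P - ss E U1 Q \<ge> k * (a - \<delta>)"
    if "P \<subseteq> N" "Q \<subseteq> Y - N" "card P = a" for P Q
  proof -
    have "ss E U1 P - ss E U1 Q = (\<Sum>u\<in>U1. real (deg E P u) - real (deg E Q u))"
      unfolding ss_def by (simp add: sum_subtractf)
    also have "\<dots> \<ge> (\<Sum>u\<in>U1. a - \<delta>)"
    proof (intro sum_mono)
      fix u assume "u \<in> U1"
      hence "real (card (sym_diff (nbhd E Y u) N)) \<le> \<delta>" using S U1 by auto
      thus "real a - \<delta> \<le> real (deg E P u) - real (deg E Q u)"
        using deg_sub_diff[OF fY N(1) that(1,2), of E u] that(3) by linarith
    qed
    finally show ?thesis using U1 by simp
  qed
  define BQ where "BQ = {q\<in>Q2. real (deg E P1 q) < a - c1}"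
  have BQk: "card BQ < k"
  proof (rule ccontr)
    assume "\<not> card BQ < k"
    then obtain W1 where W1: "W1 \<subseteq> BQ" "card W1 = k" by (meson obtain_subset_with_card_n not_less)
    have fW1: "finite W1" using W1 k by (auto intro: card_ge_0_finite)
    have "\<bar>ss E U1 P1 + ss E W1 Q1 - ss E U1 Q1 - ss E W1 P1\<bar> \<le> 2 * \<gamma> * real (card V) ^ 2"
      by (rule K_lemma[OF G cut]) (use U1X W1 P1 Q1 Q2 N X Y k U1 P1 in \<open>auto simp: BQ_def\<close>)
    moreover have "ss E W1 P1 < (\<Sum>q\<in>W1. a - c1)" unfolding ss_def
      using W1 fW1 k by (intro sum_strict_mono) (auto simp: BQ_def)
    moreover have "ss E W1 Q1 \<ge> 0" by (rule ss_nonneg)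
    moreover have "ss E U1 P1 - ss E U1 Q1 \<ge> k * (a - \<delta>)" using du P1 Q1 by auto
    ultimately show False using W1 kc1 by (auto simp: abs_le_iff algebra_simps)
  qed
  define BP where "BP = {p\<in>P1. real (deg E Q2 p) > c1}"
  have BPk: "card BP < k"
  proof (rule ccontr)
    assume "\<not> card BP < k"
    then obtain W1 where W1: "W1 \<subseteq> BP" "card W1 = k" by (meson obtain_subset_with_card_n not_less)
    have fW1: "finite W1" using W1 k by (auto intro: card_ge_0_finite)
    have "\<bar>ss E U1 P2 + ss E W1 Q2 - ss E U1 Q2 - ss E W1 P2\<bar> \<le> 2 * \<gamma> * real (card V) ^ 2"
    proof (rule K_lemma[OF G cut])
      have W1Y: "W1 \<subseteq> P1" using W1 by (auto simp: BP_def)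
      thus "U1 \<inter> W1 = {}" using U1X P1 N Y by blast
    qed (use U1X W1 P1 P2 Q2 N X Y k U1 P1 in \<open>auto simp: BP_def\<close>)
    moreover have "ss E W1 Q2 > (\<Sum>q\<in>W1. c1)" unfolding ss_def
      using W1 fW1 k by (intro sum_strict_mono) (auto simp: BP_def)
    moreover have "ss E W1 P2 \<le> real k * real a" using ss_le[OF fin(2), of E W1] W1 P2 by simp
    moreover have "ss E U1 P2 - ss E U1 Q2 \<ge> k * (a - \<delta>)" using du P2 Q2 by auto
    ultimately show False using W1 kc1 by (auto simp: abs_le_iff algebra_simps)
  qed
  have lo: "ss E Q2 P1 \<ge> (real a - k) * (a - c1)"
  proof -
    have "ss E Q2 P1 \<ge> card (Q2 - BQ) * (a - c1)" unfolding ss_def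
      by (rule sum_split_lbound) (use fin in \<open>auto simp: BQ_def\<close>)
    moreover have "real (card (Q2 - BQ)) \<ge> real a - k"
    proof -
      have "card (Q2 - BQ) = card Q2 - card BQ" using fin by (intro card_Diff_subset) (auto simp: BQ_def intro: finite_subset)
      thus ?thesis using BQk Q2 by linarith
    qed
    moreover have "real a - c1 \<ge> 0" using ac1 c1pos by simp
    ultimately show ?thesis by (meson mult_right_mono order_trans)
  qed
  have hi: "ss E P1 Q2 \<le> k * real a + a * c1"
  proof -
    have "ss E P1 Q2 \<le> card BP * real a + card (P1 - BP) * c1" unfolding ss_def
      by (rule sum_split_bound) (use fin deg_le[OF fin(4)] Q2 in \<open>auto simp: BP_def\<close>)
    moreover have "card BP * real a \<le> k * real a" using BPk by (simp add: mult_right_mono)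
    moreover have "card (P1 - BP) * c1 \<le> a * c1" using P1 c1pos fin
      by (intro mult_right_mono) (auto simp: card_mono)
    ultimately show ?thesis by linarith
  qed
  have "ss E P1 Q2 = ss E Q2 P1" using ss_sym fin symE by auto
  hence "(real a - k) * (a - c1) \<le> k * real a + a * c1" using lo hi by linarith
  moreover have "real a * (real a - 2 * k - 2 * c1) > 0" using ac1 k c1pos by (intro mult_pos_pos) auto
  moreover have "real k * c1 \<ge> 0" using c1pos by simp
  ultimately show False by (simp add: algebra_simps)
qed



lemma greedy_matching:
  fixes W :: "'a set" and f :: "'a \<Rightarrow> nat"
  assumes "finite W" "\<forall>v\<in>W. f v < J" "\<forall>v\<in>W. card {u\<in>W. f u = f v \<and> \<not> R v u} \<le> c"
    "\<forall>u v. R v u \<longrightarrow> u \<noteq> v"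
  shows "\<exists>ps. distinct (map fst ps @ map snd ps) \<and> (\<forall>p\<in>set ps. fst p \<in> W \<and> snd p \<in> W \<and> R (fst p) (snd p))
           \<and> card W \<le> 2 * length ps + c * J"
  using assms
proof (induction "card W" arbitrary: W rule: less_induct)
  case less
  show ?case
  proof (cases "\<exists>v\<in>W. \<exists>u\<in>W. R v u")
    case True
    then obtain v u where vu: "v \<in> W" "u \<in> W" "R v u" by blast
    have uv: "u \<noteq> v" using vu less.prems(4) by blast
    define W' where "W' = W - {v, u}"
    have cW': "card W' = card W - 2" unfolding W'_def using vu uv less.prems(1) by (simp add: card_Diff_subset)
    have "card W > 0" using vu less.prems(1) card_gt_0_iff by blast
    hence "card W' < card W" using cW' by linarith
    moreover have "finite W'" using less.prems(1) W'_def by auto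
    moreover have "\<forall>v\<in>W'. f v < J" using less.prems(2) W'_def by auto
    moreover have "\<forall>x\<in>W'. card {y\<in>W'. f y = f x \<and> \<not> R x y} \<le> c"
    proof
      fix x assume x: "x \<in> W'"
      have "card {y\<in>W'. f y = f x \<and> \<not> R x y} \<le> card {y\<in>W. f y = f x \<and> \<not> R x y}"
        using less.prems(1) unfolding W'_def by (intro card_mono) auto
      thus "card {y\<in>W'. f y = f x \<and> \<not> R x y} \<le> c" using less.prems(3) x W'_def by force
    qed
    ultimately obtain ps where ps: "distinct (map fst ps @ map snd ps)"
       "\<forall>p\<in>set ps. fst p \<in> W' \<and> snd p \<in> W' \<and> R (fst p) (snd p)" "card W' \<le> 2 * length ps + c * J"
      using less.hyps less.prems(4) by blast
    have nv: "v \<notin> fst ` set ps" "v \<notin> snd ` set ps" "u \<notin> fst ` set ps" "u \<notin> snd ` set ps"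
      using ps(2) W'_def by auto
    have "distinct (map fst ((v, u) # ps) @ map snd ((v, u) # ps))"
      using ps(1) nv uv by auto
    moreover have "\<forall>p\<in>set ((v, u) # ps). fst p \<in> W \<and> snd p \<in> W \<and> R (fst p) (snd p)"
      using ps(2) vu W'_def by auto
    moreover have "card W \<le> 2 * length ((v, u) # ps) + c * J"
      using ps(3) cW' by simp
    ultimately show ?thesis by blast
  next
    case False
    have "W \<subseteq> (\<Union>j<J. {u\<in>W. f u = j})" using less.prems(2) by auto
    hence "card W \<le> card (\<Union>j<J. {u\<in>W. f u = j})"
      by (intro card_mono) (use less.prems(1) in auto)
    also have "\<dots> \<le> (\<Sum>j<J. card {u\<in>W. f u = j})" by (rule card_UN_le) simp
    also have "\<dots> \<le> (\<Sum>j<J. c)"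
    proof (intro sum_mono)
      fix j assume "j \<in> {..<J}"
      show "card {u\<in>W. f u = j} \<le> c"
      proof (cases "{u\<in>W. f u = j} = {}")
        case True thus ?thesis by (simp only: card.empty)
      next
        case False
        then obtain v where v: "v \<in> W" "f v = j" by auto
        have "{u\<in>W. f u = j} = {u\<in>W. f u = f v \<and> \<not> R v u}" using \<open>\<not> (\<exists>v\<in>W. \<exists>u\<in>W. R v u)\<close> v by auto
        thus ?thesis using less.prems(3) v by metis
      qed
    qed
    finally have "card W \<le> c * J" by (simp add: mult.commute)
    hence "card W \<le> 2 * length ([] :: ('a \<times> 'a) list) + c * J" by simp
    thus ?thesis by (metis distinct.simps(1) empty_iff list.set(1) list.simps(8) append.simps(1))
  qed
qed



lemma numerics:
  fixes n h y k a w J m \<beta> \<beta>' \<kappa> \<gamma> :: real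
  assumes b: "\<beta> > 0" "\<beta>' = min \<beta> 1" "\<kappa> = \<beta>' / 1000" "\<gamma> = \<kappa>^2 / 10000"
    and n: "n \<ge> 10000 / \<beta>'" "n \<ge> 10000"
    and h: "h \<ge> n / 2 - 1 / 2" "h \<le> n / 2" "y = n - h"
    and k: "\<kappa> * n \<le> k" "k \<le> \<kappa> * n + 1"
    and a: "y / 20 - 1 \<le> a" "a \<le> y / 20"
    and w: "\<beta> * n - 1 \<le> w" "w \<le> \<beta> * n"
    and J: "J * w \<le> y + w" "J \<ge> 0"
    and m: "m \<le> n / 20 + 1"
  shows "k > 0" "k + a \<le> h" "a > 2 * k + 2 * (0.02 * y) + 4 * \<gamma> * n^2 / k"
    "2 * k \<le> h" "2 * k \<le> 0.5 * y" "0.2 * k^2 > 4 * \<gamma> * n^2" "w \<ge> 1"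
    "2 * m + 2 * k * J + 2 * k + h * (5 / 9) + \<gamma> * n^2 / y * (10 / 9) \<le> h"
proof -
  have b1: "\<beta>' > 0" "\<beta>' \<le> 1" "\<beta>' \<le> \<beta>" using b by auto
  have kap: "\<kappa> > 0" "\<kappa> \<le> 1/1000" "\<kappa> \<le> \<beta> / 1000" using b1 b by auto
  have npos: "n > 0" using n by simp
  have kn: "\<kappa> * n > 0" using kap npos by simp
  show kpos: "k > 0" using k kn by linarith
  have y: "y \<ge> n / 2" "y \<le> n / 2 + 1 / 2" using h by auto
  have kn1: "\<kappa> * n \<le> n / 1000" using kap npos by (simp add: mult_right_mono)
  show "k + a \<le> h" using k kn1 a y h n(2) by linarith
  have g1: "4 * \<gamma> * n^2 / k \<le> 4 * \<gamma> * n^2 / (\<kappa> * n)"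
  proof (rule divide_left_mono)
    show "\<kappa> * n \<le> k" using k by simp
    have "\<gamma> \<ge> 0" unfolding b(4) by simp
    thus "0 \<le> 4 * \<gamma> * n^2" by simp
    show "0 < k * (\<kappa> * n)" using kpos kn by simp
  qed
  have g2: "4 * \<gamma> * n^2 / (\<kappa> * n) = (4 / 10000) * (\<kappa> * n)" using b kap npos by (simp add: power2_eq_square field_simps)
  show "a > 2 * k + 2 * (0.02 * y) + 4 * \<gamma> * n^2 / k" 
  proof -
    have "2 * (0.02 * y) = y / 25" by simp
    thus ?thesis using g1 g2 k kn1 a y n(2) by linarith
  qed
  show "2 * k \<le> h" using k kn1 h n(2) by linarith
  show "2 * k \<le> 0.5 * y" using k kn1 y n(2) by linarith
  have "k^2 \<ge> (\<kappa> * n)^2" using k kn by (intro power_mono) auto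
  moreover have "4 * \<gamma> * n^2 = 4 / 10000 * (\<kappa> * n)^2" using b by (simp add: power_mult_distrib)
  moreover have "(\<kappa> * n)^2 > 0" using kn by (intro zero_less_power) 
  ultimately show "0.2 * k^2 > 4 * \<gamma> * n^2" by linarith
  have bn: "\<beta> * n \<ge> 10000"
  proof -
    have "\<beta>' * n \<ge> 10000" using n b1 by (simp add: field_simps)
    moreover have "\<beta>' * n \<le> \<beta> * n" using b1 npos by (simp add: mult_right_mono)
    ultimately show ?thesis by linarith
  qed
  show w1: "w \<ge> 1" using w bn by linarith
  have w2: "w \<ge> \<beta> * n / 2" using w bn by linarith
  have wpos: "w > 0" using w1 by simp
  have "k * J * w \<le> k * (y + w)" using J kpos by (simp add: mult_left_mono mult.assoc)
  hence kJ: "k * J \<le> k * y / w + k" using wpos by (simp add: field_simps)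
  have "k * y / w \<le> k * y / (\<beta> * n / 2)"
  proof (rule divide_left_mono)
    show "\<beta> * n / 2 \<le> w" by (rule w2)
    show "0 \<le> k * y" using kpos y npos by simp
    have "\<beta> * n > 0" using b npos by simp
    thus "0 < w * (\<beta> * n / 2)" using wpos by simp
  qed
  also have "\<dots> = 2 * (k / \<beta>) * (y / n)" using npos b by (simp add: field_simps)
  also have "\<dots> \<le> 2 * (k / \<beta>) * 1"
    using y npos kpos b n(2) by (intro mult_left_mono) (auto simp: field_simps)
  finally have kyw: "k * y / w \<le> 2 * (k / \<beta>)" by simp
  have "k / \<beta> \<le> (\<kappa> * n + 1) / \<beta>" using k(2) b(1) by (intro divide_right_mono) auto
  also have "\<dots> = (\<kappa> / \<beta>) * n + 1 / \<beta>" using b by (simp add: field_simps)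
  also have "\<dots> \<le> n / 1000 + n / 10000"
  proof -
    have "\<kappa> / \<beta> \<le> 1 / 1000" using kap b by (simp add: field_simps)
    hence "(\<kappa> / \<beta>) * n \<le> (1 / 1000) * n" using npos by (intro mult_right_mono) auto
    moreover have "1 / \<beta> \<le> n / 10000"
    proof -
      have "1 / \<beta> \<le> 1 / \<beta>'" using b1 by (simp add: frac_le)
      also have "1 / \<beta>' \<le> n / 10000" using n b1 by (simp add: field_simps)
      finally show ?thesis .
    qed
    ultimately show ?thesis by linarith
  qed
  finally have kb: "k / \<beta> \<le> n / 1000 + n / 10000" .
  have gy: "\<gamma> * n^2 / y \<le> n / 1000000"
  proof -
    have "\<kappa>^2 \<le> (1/1000)^2" using kap by (intro power_mono) auto
    hence gg: "\<gamma> \<le> 1 / 10000000000" unfolding b(4) by (simp add: power2_eq_square)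
    have g0: "\<gamma> \<ge> 0" unfolding b(4) by simp
    have ypos: "y > 0" using y npos by linarith
    have "\<gamma> * n^2 / y \<le> \<gamma> * n^2 / (n / 2)"
    proof (rule divide_left_mono)
      show "n / 2 \<le> y" using y by simp
      show "0 \<le> \<gamma> * n^2" using g0 by simp
      show "0 < y * (n / 2)" using ypos npos by simp
    qed
    also have "\<dots> = 2 * \<gamma> * n" using npos by (simp add: power2_eq_square field_simps)
    also have "\<dots> \<le> 2 * (1 / 10000000000) * n" using gg npos by (intro mult_right_mono) auto
    finally have A: "\<gamma> * n^2 / y \<le> 2 * (1 / 10000000000) * n" .
    show ?thesis using A npos by linarith
  qed
  have e2: "2 * k * J = 2 * (k * J)" by simp
  show "2 * m + 2 * k * J + 2 * k + h * (5 / 9) + \<gamma> * n^2 / y * (10 / 9) \<le> h"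
  proof -
    have s1: "2 * k * J \<le> 4 * (k / \<beta>) + 2 * k" using kJ kyw e2 by linarith
    have "\<gamma> * n^2 / y * (10 / 9) \<le> n / 1000000 * (10 / 9)" using gy by (rule mult_right_mono) simp
    hence s2: "\<gamma> * n^2 / y * (10 / 9) \<le> n / 900000" by simp
    show ?thesis using s1 s2 kb m k kn1 h(1,2) n(2) by linarith
  qed
qed



definition goodpair :: "real \<Rightarrow> nat \<Rightarrow> (nat \<Rightarrow> nat \<Rightarrow> bool) \<Rightarrow> nat set \<Rightarrow> nat \<Rightarrow> nat \<Rightarrow> bool" where
  "goodpair \<beta> n E Y v u \<longleftrightarrow> \<bar>real (deg E Y v) - real (deg E Y u)\<bar> \<le> \<beta> * real n \<and>
          0.02 * card Y \<le> real (card (sym_diff (nbhd E Y v) (nbhd E Y u))) \<and>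
          real (card (sym_diff (nbhd E Y v) (nbhd E Y u))) \<le> 0.98 * card Y \<and>
          0.1 * card Y \<le> real (deg E Y v) \<and> real (deg E Y v) \<le> 0.9 * card Y \<and>
          0.1 * card Y \<le> real (deg E Y u) \<and> real (deg E Y u) \<le> 0.9 * card Y"

lemma pairs_to_good:
  assumes XY: "X \<union> Y = V" "X \<inter> Y = {}" "card X = card V div 2"
  and len: "length ps \<ge> nat \<lceil>real (card V) / 20\<rceil>"
  and dist: "distinct (map fst ps @ map snd ps)"
  and P: "\<forall>p\<in>set ps. fst p \<in> X \<and> snd p \<in> X \<and> goodpair \<beta> (card V) E Y (fst p) (snd p)"
  shows "host_good \<beta> V E"
proof -
  define m where "m = nat \<lceil>real (card V) / 20\<rceil>"
  define xs where "xs = (\<lambda>i. fst (ps ! i))"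
  define xs' where "xs' = (\<lambda>i. snd (ps ! i))"
  have mem: "ps ! i \<in> set ps" if "i < m" for i
  proof -
    have "i < length ps" using that len unfolding m_def by (rule order_less_le_trans)
    thus ?thesis by simp
  qed
  have d1: "distinct (map fst ps)" "distinct (map snd ps)" "set (map fst ps) \<inter> set (map snd ps) = {}"
    using dist by auto
  have inj: "inj_on (\<lambda>p. if fst p then xs (snd p) else xs' (snd p)) (UNIV \<times> {..<m})"
  proof (rule inj_onI)
    fix p q assume p: "p \<in> UNIV \<times> {..<m}" and q: "q \<in> UNIV \<times> {..<m}"
      and eq: "(if fst p then xs (snd p) else xs' (snd p)) = (if fst q then xs (snd q) else xs' (snd q))"
    obtain b i where bi: "p = (b, i)" by (cases p)
    obtain c j where cj: "q = (c, j)" by (cases q)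
    have "i < m" "j < m" using p q bi cj by auto
    hence i: "i < length ps" "j < length ps" using len unfolding m_def by (auto intro: order_less_le_trans)
    have f: "fst (ps ! i) = fst (ps ! j) \<Longrightarrow> i = j"
      using d1(1) i by (metis length_map nth_eq_iff_index_eq nth_map)
    have s: "snd (ps ! i) = snd (ps ! j) \<Longrightarrow> i = j"
      using d1(2) i by (metis length_map nth_eq_iff_index_eq nth_map)
    have fs: "fst (ps ! i) \<noteq> snd (ps ! j)" "snd (ps ! i) \<noteq> fst (ps ! j)"
      using d1(3) i by (force simp: set_conv_nth)+
    show "p = q" using eq bi cj f s fs unfolding xs_def xs'_def
      by (cases b; cases c) auto
  qed
  show ?thesis unfolding host_good_def Let_def
  proof (intro exI conjI)
    show "X \<union> Y = V" "X \<inter> Y = {}" "card X = card V div 2" by (fact XY)+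
    show "\<forall>i<nat \<lceil>real (card V) / 20\<rceil>. xs i \<in> X \<and> xs' i \<in> X"
      using mem P unfolding xs_def xs'_def m_def by blast
    show "inj_on (\<lambda>p. if fst p then xs (snd p) else xs' (snd p)) (UNIV \<times> {..<nat \<lceil>real (card V) / 20\<rceil>})"
      using inj unfolding m_def .
    have g: "goodpair \<beta> (card V) E Y (xs i) (xs' i)" if "i < m" for i
      using mem[OF that] P unfolding xs_def xs'_def by blast
    show "\<forall>i<nat \<lceil>real (card V) / 20\<rceil>.
       \<bar>real (deg E Y (xs i)) - real (deg E Y (xs' i))\<bar> \<le> \<beta> * real (card V) \<and>
       0.02 * real (card Y) \<le> real (card (sym_diff (nbhd E Y (xs i)) (nbhd E Y (xs' i)))) \<and>
       real (card (sym_diff (nbhd E Y (xs i)) (nbhd E Y (xs' i)))) \<le> 0.98 * real (card Y) \<and>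
       0.1 * real (card Y) \<le> real (deg E Y (xs i)) \<and> real (deg E Y (xs i)) \<le> 0.9 * real (card Y) \<and>
       0.1 * real (card Y) \<le> real (deg E Y (xs' i)) \<and> real (deg E Y (xs' i)) \<le> 0.9 * real (card Y)"
      using g unfolding goodpair_def m_def by blast
  qed
qed



lemma nbhd_sub: "nbhd E Y v \<subseteq> Y" unfolding nbhd_def by auto

lemma few_close_anti:
  assumes G: "is_graph V E" and cut: "cutcond \<gamma> V E"
  and X: "X \<subseteq> V" "card X = card V div 2" and Y: "Y = V - X"
  and v: "0.1 * card Y \<le> real (deg E Y v)" "real (deg E Y v) \<le> 0.9 * card Y"
  and k: "k > 0" "k + a \<le> card V div 2"
  and a: "real a > 2 * k + 2 * (0.02 * card Y) + 4 * \<gamma> * real (card V) ^ 2 / k" "20 * a \<le> card Y"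
  and gpos: "\<gamma> \<ge> 0"
  shows "card {u\<in>X. real (card (sym_diff (nbhd E Y v) (nbhd E Y u))) < 0.02 * card Y} < k"
    and "card {u\<in>X. real (card (sym_diff (nbhd E Y v) (nbhd E Y u))) > 0.98 * card Y} < k"
proof -
  have fV: "finite V" using G unfolding is_graph_def by auto
  have fY: "finite Y" using fV Y by auto
  have a2: "real (2 * a) \<le> 0.1 * card Y" using a(2) by linarith
  have dN: "card (Y - nbhd E Y v) = card Y - deg E Y v" unfolding deg_def
    using fY nbhd_sub[of E Y v] by (intro card_Diff_subset) (auto intro: finite_subset)
  have dle: "deg E Y v \<le> card Y" using deg_le[OF fY] .
  have dN': "real (card (Y - nbhd E Y v)) = real (card Y) - real (deg E Y v)" using dN dle by simp
  show "card {u\<in>X. real (card (sym_diff (nbhd E Y v) (nbhd E Y u))) < 0.02 * card Y} < k"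
  proof (rule ccontr)
    assume "\<not> ?thesis"
    hence kS: "k \<le> card {u\<in>X. real (card (sym_diff (nbhd E Y v) (nbhd E Y u))) < 0.02 * card Y}" by simp
    show False
    proof (rule cluster_lemma[OF G cut X Y, of "nbhd E Y v" a _ k "0.02 * card Y"])
      show "nbhd E Y v \<subseteq> Y" by (rule nbhd_sub)
      show "2 * a \<le> card (nbhd E Y v)" using a2 v unfolding deg_def by linarith
      show "2 * a \<le> card (Y - nbhd E Y v)" using a2 v dN' by linarith
      show "{u\<in>X. real (card (sym_diff (nbhd E Y v) (nbhd E Y u))) < 0.02 * card Y} \<subseteq> X" by auto
      show "k \<le> card {u\<in>X. real (card (sym_diff (nbhd E Y v) (nbhd E Y u))) < 0.02 * card Y}" by (fact kS)
      show "\<forall>u\<in>{u\<in>X. real (card (sym_diff (nbhd E Y v) (nbhd E Y u))) < 0.02 * card Y}.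
          real (card (sym_diff (nbhd E Y u) (nbhd E Y v))) \<le> 0.02 * card Y"
        by (auto simp: Un_commute)
    qed (use k a gpos in auto)
  qed
  show "card {u\<in>X. real (card (sym_diff (nbhd E Y v) (nbhd E Y u))) > 0.98 * card Y} < k"
  proof (rule ccontr)
    assume "\<not> ?thesis"
    hence kS: "k \<le> card {u\<in>X. real (card (sym_diff (nbhd E Y v) (nbhd E Y u))) > 0.98 * card Y}" by simp
    have YN: "Y - (Y - nbhd E Y v) = nbhd E Y v" using nbhd_sub[of E Y v] by auto
    show False
    proof (rule cluster_lemma[OF G cut X Y, of "Y - nbhd E Y v" a _ k "0.02 * card Y"])
      show "Y - nbhd E Y v \<subseteq> Y" by auto
      show "2 * a \<le> card (Y - nbhd E Y v)" using a2 v dN' by linarith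
      show "2 * a \<le> card (Y - (Y - nbhd E Y v))" unfolding YN using a2 v unfolding deg_def by linarith
      show "{u\<in>X. real (card (sym_diff (nbhd E Y v) (nbhd E Y u))) > 0.98 * card Y} \<subseteq> X" by auto
      show "k \<le> card {u\<in>X. real (card (sym_diff (nbhd E Y v) (nbhd E Y u))) > 0.98 * card Y}" by (fact kS)
      show "\<forall>u\<in>{u\<in>X. real (card (sym_diff (nbhd E Y v) (nbhd E Y u))) > 0.98 * card Y}.
          real (card (sym_diff (nbhd E Y u) (Y - nbhd E Y v))) \<le> 0.02 * card Y"
      proof
        fix u assume u: "u \<in> {u\<in>X. real (card (sym_diff (nbhd E Y v) (nbhd E Y u))) > 0.98 * card Y}"
        have eq: "sym_diff (nbhd E Y u) (Y - nbhd E Y v) = Y - sym_diff (nbhd E Y v) (nbhd E Y u)"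
          using nbhd_sub[of E Y u] nbhd_sub[of E Y v] by blast
        have "card (Y - sym_diff (nbhd E Y v) (nbhd E Y u)) = card Y - card (sym_diff (nbhd E Y v) (nbhd E Y u))"
          using fY nbhd_sub[of E Y u] nbhd_sub[of E Y v] by (intro card_Diff_subset) (auto intro: finite_subset)
        moreover have "card (sym_diff (nbhd E Y v) (nbhd E Y u)) \<le> card Y"
          using fY nbhd_sub[of E Y u] nbhd_sub[of E Y v] by (intro card_mono) auto
        ultimately have "real (card (sym_diff (nbhd E Y u) (Y - nbhd E Y v))) = card Y - real (card (sym_diff (nbhd E Y v) (nbhd E Y u)))"
          unfolding eq by simp
        thus "real (card (sym_diff (nbhd E Y u) (Y - nbhd E Y v))) \<le> 0.02 * card Y" using u by simp
      qed
    qed (use k a gpos in auto)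
  qed
qed

lemma div_eq_close:
  assumes "(p::nat) div w = q div w" "w > 0"
  shows "\<bar>real p - real q\<bar> < real w"
proof -
  have "p = w * (p div w) + p mod w" "q = w * (q div w) + q mod w" by simp_all
  moreover have "p mod w < w" "q mod w < w" using assms by simp_all
  ultimately have "real p = real (w * (p div w)) + real (p mod w)" "real q = real (w * (p div w)) + real (q mod w)"
    using assms(1) by (metis of_nat_add)+
  moreover have "real (p mod w) < real w" "real (q mod w) < real w" using \<open>p mod w < w\<close> \<open>q mod w < w\<close> by simp_all
  ultimately have "real p - real q = real (p mod w) - real (q mod w)" "real (p mod w) < real w" "real (q mod w) < real w"
    by linarith+
  thus ?thesis unfolding abs_less_iff by linarith
qed



lemma core:
  assumes G: "is_graph V E" and cut: "cutcond \<gamma> V E"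
  and b: "\<beta> > 0" "\<beta>' = min \<beta> 1" "\<kappa> = \<beta>' / 1000" "\<gamma> = \<kappa>^2 / 10000"
  and nb: "real (card V) \<ge> 10000 / \<beta>'" "card V \<ge> 10000"
  shows "host_good \<beta> V E"
proof -
  define n where "n = card V"
  have fV: "finite V" using G unfolding is_graph_def by auto
  have symE: "\<forall>x y. E x y \<longrightarrow> E y x" using G unfolding is_graph_def by auto
  have gpos: "\<gamma> \<ge> 0" unfolding b(4) by simp
  have kpos0: "\<kappa> > 0" using b by simp
  obtain X where X: "X \<subseteq> V" "card X = n div 2"
    using obtain_subset_with_card_n[of "n div 2" V] unfolding n_def by auto
  define Y where "Y = V - X"
  have fX: "finite X" "finite Y" using X fV Y_def by (auto intro: finite_subset)
  have cY: "card Y = n - n div 2" unfolding Y_def n_def using X fX by (simp add: card_Diff_subset n_def)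
  define k where "k = nat \<lceil>\<kappa> * real n\<rceil>"
  define a where "a = card Y div 20"
  define w where "w = nat \<lfloor>\<beta> * real n\<rfloor>"
  define J where "J = card Y div w + 1"
  define m where "m = nat \<lceil>real n / 20\<rceil>"
  have rh: "real (n div 2) \<ge> real n / 2 - 1 / 2" "real (n div 2) \<le> real n / 2" by linarith+
  have ry: "real (card Y) = real n - real (n div 2)" using cY by simp
  have rk: "\<kappa> * real n \<le> real k" "real k \<le> \<kappa> * real n + 1"
  proof -
    have "\<kappa> * real n \<ge> 0" using kpos0 by simp
    hence "real k = of_int \<lceil>\<kappa> * real n\<rceil>" unfolding k_def by simp
    thus "\<kappa> * real n \<le> real k" "real k \<le> \<kappa> * real n + 1" using ceiling_correct[of "\<kappa> * real n"] by linarith+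
  qed
  have ra: "real (card Y) / 20 - 1 \<le> real a" "real a \<le> real (card Y) / 20"
  proof -
    have "20 * a \<le> card Y" "card Y < 20 * a + 20" unfolding a_def by linarith+
    hence "20 * real a \<le> real (card Y)" "real (card Y) < 20 * real a + 20" by linarith+
    thus "real (card Y) / 20 - 1 \<le> real a" "real a \<le> real (card Y) / 20" by linarith+
  qed
  have rw: "\<beta> * real n - 1 \<le> real w" "real w \<le> \<beta> * real n"
  proof -
    have "\<beta> * real n \<ge> 0" using b by simp
    hence "real w = of_int \<lfloor>\<beta> * real n\<rfloor>" unfolding w_def by simp
    thus "\<beta> * real n - 1 \<le> real w" "real w \<le> \<beta> * real n" using floor_correct[of "\<beta> * real n"] by linarith+
  qed
  have rJ: "real J * real w \<le> real (card Y) + real w" "real J \<ge> 0"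
  proof -
    have "(card Y div w) * w \<le> card Y" by (simp add: div_times_less_eq_dividend)
    hence "J * w \<le> card Y + w" unfolding J_def by (simp add: algebra_simps)
    hence "real (J * w) \<le> real (card Y + w)" by (simp only: of_nat_le_iff)
    thus "real J * real w \<le> real (card Y) + real w" by simp
  qed simp
  have rm: "real m \<le> real n / 20 + 1"
  proof -
    have "real m = of_int \<lceil>real n / 20\<rceil>" unfolding m_def by simp
    thus ?thesis using ceiling_correct[of "real n / 20"] by linarith
  qed
  have nn: "real n \<ge> 10000 / \<beta>'" "real n \<ge> 10000" using nb unfolding n_def by auto
  note NU = numerics[OF b nn rh ry rk ra rw rJ rm]
  have k0: "k > 0" using NU(1) by simp
  have kah: "k + a \<le> card V div 2" using NU(2) unfolding n_def by linarith
  have aa: "real a > 2 * real k + 2 * (0.02 * real (card Y)) + 4 * \<gamma> * real (card V) ^ 2 / real k" using NU(3) unfolding n_def by simp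
  have k2h: "2 * k \<le> card V div 2" using NU(4) unfolding n_def by linarith
  have k2y: "real (2 * k) \<le> 0.5 * card Y" using NU(5) by simp
  have kg: "0.2 * real k ^ 2 > 4 * \<gamma> * real (card V) ^ 2" using NU(6) unfolding n_def .
  have w1: "w \<ge> 1" using NU(7) by simp
  have cnt: "2 * real m + 2 * real k * real J + 2 * real k + real (n div 2) * (5 / 9)
      + \<gamma> * (real n)^2 / real (card Y) * (10 / 9) \<le> real (n div 2)" using NU(8) .
  have a20: "20 * a \<le> card Y" unfolding a_def by simp
  have XV: "X \<subseteq> V" "card X = card V div 2" using X n_def by auto
  have Ypos: "card Y > 0" using cY nb unfolding n_def by linarith
  define L where "L = {x\<in>X. real (deg E Y x) < 0.1 * card Y}"
  define H where "H = {x\<in>X. real (deg E Y x) > 0.9 * card Y}"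
  define G0 where "G0 = {x\<in>X. 0.1 * card Y \<le> real (deg E Y x) \<and> real (deg E Y x) \<le> 0.9 * card Y}"
  have XLHG: "X = G0 \<union> L \<union> H" unfolding L_def H_def G0_def by auto
  have fLHG: "finite L" "finite H" "finite G0" using fX unfolding L_def H_def G0_def by auto
  have cX: "card X = card G0 + card L + card H"
  proof -
    have "card (G0 \<union> L \<union> H) = card G0 + card L + card H"
    proof -
      have d1: "G0 \<inter> L = {}" "(G0 \<union> L) \<inter> H = {}" unfolding L_def H_def G0_def by auto
      have "card (G0 \<union> L \<union> H) = card (G0 \<union> L) + card H"
        using fLHG d1 by (intro card_Un_disjoint) auto
      moreover have "card (G0 \<union> L) = card G0 + card L" using fLHG d1 by (intro card_Un_disjoint) auto
      ultimately show ?thesis by simp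
    qed
    thus ?thesis using XLHG by simp
  qed
  have cutX: "\<bar>ss E X Y - real (card V div 2) * real (card V - card V div 2) / 2\<bar> \<le> \<gamma> * real (card V) ^ 2"
    using cut_T[OF G cut XV] unfolding Y_def .
  have ssXY: "ss E X Y = (\<Sum>x\<in>X. real (deg E Y x))" unfolding ss_def ..
  have yreal: "real (card V - card V div 2) = real (card Y)" using cY n_def by simp
  have Lb: "real (card L) \<le> real (n div 2) * (5 / 9) + \<gamma> * (real n)^2 / real (card Y) * (10 / 9)"
  proof -
    have "(\<Sum>x\<in>X. real (deg E Y x)) \<le> card L * (0.1 * card Y) + card (X - L) * real (card Y)"
      by (rule sum_split_bound) (use fX deg_le[OF fX(2)] in \<open>auto simp: L_def less_imp_le\<close>)
    moreover have "card (X - L) = card X - card L" using fLHG by (intro card_Diff_subset) (auto simp: L_def)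
    moreover have "card L \<le> card X" using fX by (intro card_mono) (auto simp: L_def)
    ultimately have "ss E X Y \<le> card L * (0.1 * card Y) + (real (card X) - card L) * real (card Y)"
      using ssXY by (simp add: of_nat_diff)
    moreover have "ss E X Y \<ge> real (n div 2) * real (card Y) / 2 - \<gamma> * (real n)^2"
      using cutX yreal unfolding n_def by (simp add: abs_le_iff)
    ultimately have "0.9 * real (card L) * real (card Y) \<le> real (n div 2) * real (card Y) / 2 + \<gamma> * (real n)^2"
      using X by (simp add: algebra_simps)
    hence "real (card L) * real (card Y) \<le> (real (n div 2) * (5 / 9) + \<gamma> * (real n)^2 * (10 / 9) / card Y) * card Y"
      using Ypos by (simp add: algebra_simps)
    hence "real (card L) \<le> real (n div 2) * (5 / 9) + \<gamma> * (real n)^2 * (10 / 9) / card Y"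
      using Ypos by (subst (asm) mult_le_cancel_right_pos) auto
    thus ?thesis by simp
  qed
  have Hb: "real (card H) \<le> real (n div 2) * (5 / 9) + \<gamma> * (real n)^2 / real (card Y) * (10 / 9)"
  proof -
    have "ss E X Y \<ge> card (X - (X - H)) * (0.9 * card Y)" unfolding ssXY
      by (rule sum_split_lbound) (use fX in \<open>auto simp: H_def less_imp_le\<close>)
    moreover have "X - (X - H) = H" unfolding H_def by auto
    moreover have "ss E X Y \<le> real (n div 2) * real (card Y) / 2 + \<gamma> * (real n)^2"
      using cutX yreal unfolding n_def by (simp add: abs_le_iff)
    ultimately have "real (card H) * real (card Y) \<le> (real (n div 2) * (5 / 9) + \<gamma> * (real n)^2 * (10 / 9) / card Y) * card Y"
      using Ypos by (simp add: algebra_simps)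
    hence "real (card H) \<le> real (n div 2) * (5 / 9) + \<gamma> * (real n)^2 * (10 / 9) / card Y"
      using Ypos by (subst (asm) mult_le_cancel_right_pos) auto
    thus ?thesis by simp
  qed
  have minLH: "card L < 2 * k \<or> card H < 2 * k"
  proof (rule ccontr)
    assume "\<not> ?thesis"
    hence c: "2 * k \<le> card L" "2 * k \<le> card H" by auto
    have "k \<le> card L" "k \<le> card H" using c by linarith+
    then obtain L1 where L1: "L1 \<subseteq> L" "card L1 = k" by (meson obtain_subset_with_card_n)
    have "card (L - L1) = card L - card L1" using fLHG L1 by (intro card_Diff_subset) (auto intro: finite_subset)
    hence "card (L - L1) \<ge> k" using c L1 by linarith
    then obtain L2 where L2: "L2 \<subseteq> L - L1" "card L2 = k" by (meson obtain_subset_with_card_n)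
    obtain H1 where H1: "H1 \<subseteq> H" "card H1 = k" using \<open>k \<le> card H\<close> by (meson obtain_subset_with_card_n)
    have "card (H - H1) = card H - card H1" using fLHG H1 by (intro card_Diff_subset) (auto intro: finite_subset)
    hence "card (H - H1) \<ge> k" using c H1 by linarith
    then obtain H2 where H2: "H2 \<subseteq> H - H1" "card H2 = k" by (meson obtain_subset_with_card_n)
    show False
    proof (rule degree_lemma[OF G cut XV Y_def, of H1 H2 k L1 L2])
      show "H1 \<subseteq> X" "H2 \<subseteq> X" "H1 \<inter> H2 = {}" using H1 H2 by (auto simp: H_def)
      show "L1 \<subseteq> X" "L2 \<subseteq> X" "L1 \<inter> L2 = {}" using L1 L2 by (auto simp: L_def)
      show "\<forall>x\<in>H1 \<union> H2. real (deg E Y x) > 0.9 * card Y" using H1 H2 by (auto simp: H_def)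
      show "\<forall>x\<in>L1 \<union> L2. real (deg E Y x) < 0.1 * card Y" using L1 L2 by (auto simp: L_def)
    qed (use H1 H2 L1 L2 k0 k2h k2y kg in auto)
  qed
  have G0big: "real (card G0) \<ge> 2 * real m + 2 * real k * real J"
  proof -
    have "real (card L) + real (card H) \<le> 2 * real k + (real (n div 2) * (5 / 9) + \<gamma> * (real n)^2 / real (card Y) * (10 / 9))"
      using minLH Lb Hb by linarith
    moreover have "real (card X) = real (card G0) + real (card L) + real (card H)" using cX by simp
    ultimately show ?thesis using cnt X by linarith
  qed
  define f where "f = (\<lambda>x. deg E Y x div w)"
  define sd where "sd = (\<lambda>v u. real (card (sym_diff (nbhd E Y v) (nbhd E Y u))))"
  define R where "R = (\<lambda>v u. u \<noteq> v \<and> f u = f v \<and> 0.02 * card Y \<le> sd v u \<and> sd v u \<le> 0.98 * card Y)"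
  have fJ: "\<forall>v\<in>G0. f v < J"
  proof
    fix v assume "v \<in> G0"
    have "deg E Y v \<le> card Y" by (rule deg_le[OF fX(2)])
    hence "deg E Y v div w \<le> card Y div w" by (rule div_le_mono)
    thus "f v < J" unfolding f_def J_def by simp
  qed
  have cbound: "\<forall>v\<in>G0. card {u\<in>G0. f u = f v \<and> \<not> R v u} \<le> 2 * k"
  proof
    fix v assume v: "v \<in> G0"
    have vX: "v \<in> X" and vd: "0.1 * card Y \<le> real (deg E Y v)" "real (deg E Y v) \<le> 0.9 * card Y"
      using v unfolding G0_def by auto
    note FC = few_close_anti[OF G cut XV Y_def vd k0 kah aa a20 gpos]
    let ?C = "{u\<in>X. real (card (sym_diff (nbhd E Y v) (nbhd E Y u))) < 0.02 * card Y}"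
    let ?A = "{u\<in>X. real (card (sym_diff (nbhd E Y v) (nbhd E Y u))) > 0.98 * card Y}"
    have sub: "{u\<in>G0. f u = f v \<and> \<not> R v u} \<subseteq> ?C \<union> ?A"
    proof
      fix u assume u: "u \<in> {u\<in>G0. f u = f v \<and> \<not> R v u}"
      show "u \<in> ?C \<union> ?A"
      proof (cases "u = v")
        case True
        thus ?thesis using vX Ypos by simp
      next
        case False
        thus ?thesis using u unfolding R_def sd_def G0_def by auto
      qed
    qed
    have "card {u\<in>G0. f u = f v \<and> \<not> R v u} \<le> card (?C \<union> ?A)"
      using fX by (intro card_mono[OF _ sub]) auto
    also have "\<dots> \<le> card ?C + card ?A" by (rule card_Un_le)
    finally show "card {u\<in>G0. f u = f v \<and> \<not> R v u} \<le> 2 * k" using FC by linarith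
  qed
  have Rne: "\<forall>u v. R v u \<longrightarrow> u \<noteq> v" unfolding R_def by auto
  obtain ps where ps: "distinct (map fst ps @ map snd ps)"
      "\<forall>p\<in>set ps. fst p \<in> G0 \<and> snd p \<in> G0 \<and> R (fst p) (snd p)"
      "card G0 \<le> 2 * length ps + 2 * k * J"
    using greedy_matching[OF fLHG(3) fJ cbound Rne] by blast
  have "real (card G0) \<le> 2 * real (length ps) + 2 * real k * real J"
    using ps(3) by (metis of_nat_add of_nat_le_iff of_nat_mult of_nat_numeral)
  hence len: "length ps \<ge> m" using G0big by linarith
  show ?thesis
  proof (rule pairs_to_good[of X Y V ps])
    show "X \<union> Y = V" "X \<inter> Y = {}" "card X = card V div 2" using XV Y_def by auto
    show "nat \<lceil>real (card V) / 20\<rceil> \<le> length ps" using len unfolding m_def n_def .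
    show "distinct (map fst ps @ map snd ps)" by (fact ps(1))
    show "\<forall>p\<in>set ps. fst p \<in> X \<and> snd p \<in> X \<and> goodpair \<beta> (card V) E Y (fst p) (snd p)"
    proof
      fix p assume p: "p \<in> set ps"
      have inG: "fst p \<in> G0" "snd p \<in> G0" and Rp: "R (fst p) (snd p)" using ps(2) p by auto
      have "\<bar>real (deg E Y (fst p)) - real (deg E Y (snd p))\<bar> < real w"
        using Rp w1 unfolding R_def f_def by (intro div_eq_close) auto
      hence "\<bar>real (deg E Y (fst p)) - real (deg E Y (snd p))\<bar> \<le> \<beta> * real (card V)"
        using rw unfolding n_def by linarith
      thus "fst p \<in> X \<and> snd p \<in> X \<and> goodpair \<beta> (card V) E Y (fst p) (snd p)"
        using inG Rp unfolding goodpair_def G0_def R_def sd_def by auto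
    qed
  qed
qed


theorem lemma2p13:
  fixes \<beta> :: real
  assumes "\<beta> > 0"
  shows "\<exists>\<gamma>::real. \<gamma> > 0 \<and> (\<exists>n0::nat. \<forall>(V::nat set) E.
           is_graph V E \<longrightarrow> card V \<ge> n0 \<longrightarrow>
           (\<forall>X Y. X \<union> Y = V \<longrightarrow> X \<inter> Y = {} \<longrightarrow> card X = card V div 2 \<longrightarrow>
              \<bar>real (e_between E X Y) - real (card X) * real (card Y) / 2\<bar> \<le> \<gamma> * real (card V) ^ 2)
           \<longrightarrow> host_good \<beta> V E)"
proof -
  define \<beta>' where "\<beta>' = min \<beta> 1"
  define \<kappa> where "\<kappa> = \<beta>' / 1000"
  define \<gamma> where "\<gamma> = \<kappa>^2 / 10000"
  have bpos: "\<beta>' > 0" unfolding \<beta>'_def using assms by simp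
  define n0 where "n0 = nat \<lceil>10000 / \<beta>'\<rceil> + 10000"
  show ?thesis
  proof (rule exI[of _ \<gamma>], intro conjI)
    show "\<gamma> > 0" unfolding \<gamma>_def \<kappa>_def using bpos by simp
    show "\<exists>n0::nat. \<forall>(V::nat set) E.
           is_graph V E \<longrightarrow> card V \<ge> n0 \<longrightarrow>
           (\<forall>X Y. X \<union> Y = V \<longrightarrow> X \<inter> Y = {} \<longrightarrow> card X = card V div 2 \<longrightarrow>
              \<bar>real (e_between E X Y) - real (card X) * real (card Y) / 2\<bar> \<le> \<gamma> * real (card V) ^ 2)
           \<longrightarrow> host_good \<beta> V E"
    proof (rule exI[of _ n0], intro allI impI)
      fix V :: "nat set" and E
      assume G: "is_graph V E" and nV: "card V \<ge> n0"
        and cut0: "\<forall>X Y. X \<union> Y = V \<longrightarrow> X \<inter> Y = {} \<longrightarrow> card X = card V div 2 \<longrightarrow>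
              \<bar>real (e_between E X Y) - real (card X) * real (card Y) / 2\<bar> \<le> \<gamma> * real (card V) ^ 2"
      have cut: "cutcond \<gamma> V E" unfolding cutcond_def using cut0 .
      have n1: "card V \<ge> 10000" using nV unfolding n0_def by linarith
      have "card V \<ge> nat \<lceil>10000 / \<beta>'\<rceil>" using nV unfolding n0_def by linarith
      hence "real (card V) \<ge> real (nat \<lceil>10000 / \<beta>'\<rceil>)" by (simp only: of_nat_le_iff)
      moreover have "real (nat \<lceil>10000 / \<beta>'\<rceil>) \<ge> 10000 / \<beta>'"
        by (metis le_nat_iff of_int_of_nat_eq of_nat_le_iff order.trans le_of_int_ceiling nat_ceiling_le_eq order_refl)
      ultimately have n2: "real (card V) \<ge> 10000 / \<beta>'" by linarith
      show "host_good \<beta> V E" by (rule core[OF G cut assms \<beta>'_def \<kappa>_def \<gamma>_def n2 n1])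
    qed
  qed
qed

end
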